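(* There exist private information distinguishing debate games $B=(A,S,P,C_w,C_l)$ and $B'=(A,S,P,C'_w,C'_l)$ with $C'_w(s)\supseteq C_w(s)$ and $C'_l(s)\subseteq C_l(s)$ for all $s\in S$ such that the minimum possible error of a policy for $B'$ exceeds the minimum possible error of a policy for $B$.
   Context: Let $\delta$ be a special default action. A PIDDG is a tuple $(A,S,P,C_w,C_l)$ with $A$ finite, $\delta\notin A$, $S$ finite, $P$ a probability mass function on $S$, and $C_w,C_l:S\to\mathcal P(A)$. A policy is $M:\{1,2\}\times(A\cup\{\delta\})^2\to[0,1]$ with $M(1,a_1,a_2)+M(2,a_1,a_2)=1$. $G_1(B,M)$ is the following Bayesian game with agents $1,2$. Each agent has action set $A\cup\{\delta\}$ and type set $\mathcal P(A)$. A scenario $s\sim P$ is drawn, and agent 1 gets type $C_w(s)$ while agent 2 gets type $C_l(s)$. Payoffs are as follows: - if both agents play available actions ($a_i\in t_i\cup\{\delta\}$), agent $i$ gets $M(i,a_1,a_2)$; - if exactly one plays an unavailable action, it gets $0$ and the other gets $1$; - if both play unavailable actions, each gets $1/2$. $G_2(B,M)$ is the same with the types swapped (agent 1 gets $C_l(s)$, agent 2 gets $C_w(s)$). The error is $\frac{v_1(G_2(B,M))+v_2(G_1(B,M))}{2}$, where $v_i$ denotes the value of the zero-sum Bayesian game to agent $i$. A policy of minimum error always exists. *)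

theory Defs
  imports "HOL-Probability.Probability"
begin

text \<open>Actions are encoded as \<open>nat option\<close>: \<open>None\<close> is the default action \<delta>,
  \<open>Some a\<close> is the action a \<in> A (so \<delta> \<notin> A automatically).\<close>

definition acts :: "nat set \<Rightarrow> nat option set" where
  "acts A = insert None (Some ` A)"

definition available :: "nat set \<Rightarrow> nat option \<Rightarrow> bool" where
  "available t a \<longleftrightarrow> a = None \<or> (\<exists>x. a = Some x \<and> x \<in> t)"

definition piddg :: "nat set \<Rightarrow> nat set \<Rightarrow> (nat \<Rightarrow> real) \<Rightarrow> (nat \<Rightarrow> nat set) \<Rightarrow> (nat \<Rightarrow> nat set) \<Rightarrow> bool" where
  "piddg A S P Cw Cl \<longleftrightarrow> finite A \<and> finite S \<and> (\<forall>s\<in>S. 0 \<le> P s) \<and> (\<Sum>s\<in>S. P s) = 1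
     \<and> (\<forall>s\<in>S. Cw s \<subseteq> A \<and> Cl s \<subseteq> A)"

definition policies :: "nat set \<Rightarrow> (nat \<Rightarrow> nat option \<Rightarrow> nat option \<Rightarrow> real) set" where
  "policies A = {M. \<forall>a1\<in>acts A. \<forall>a2\<in>acts A.
      0 \<le> M 1 a1 a2 \<and> M 1 a1 a2 \<le> 1 \<and> 0 \<le> M 2 a1 a2 \<and> M 2 a1 a2 \<le> 1
      \<and> M 1 a1 a2 + M 2 a1 a2 = 1}"

definition payoff :: "(nat \<Rightarrow> nat option \<Rightarrow> nat option \<Rightarrow> real) \<Rightarrow> nat \<Rightarrow> nat set \<Rightarrow> nat set
    \<Rightarrow> nat option \<Rightarrow> nat option \<Rightarrow> real" where
  "payoff M i t1 t2 a1 a2 =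
     (if available t1 a1 \<and> available t2 a2 then M i a1 a2
      else if \<not> available t1 a1 \<and> \<not> available t2 a2 then 1/2
      else if (i = 1 \<longleftrightarrow> available t1 a1) then 1 else 0)"

definition strategies :: "nat set \<Rightarrow> (nat set \<Rightarrow> nat option pmf) set" where
  "strategies A = {\<sigma>. \<forall>t. set_pmf (\<sigma> t) \<subseteq> acts A}"

definition exp_payoff :: "nat set \<Rightarrow> nat set \<Rightarrow> (nat \<Rightarrow> real) \<Rightarrow> (nat \<Rightarrow> nat set) \<Rightarrow> (nat \<Rightarrow> nat set)
    \<Rightarrow> (nat \<Rightarrow> nat option \<Rightarrow> nat option \<Rightarrow> real) \<Rightarrow> nat
    \<Rightarrow> (nat set \<Rightarrow> nat option pmf) \<Rightarrow> (nat set \<Rightarrow> nat option pmf) \<Rightarrow> real" where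
  "exp_payoff A S P T1 T2 M i \<sigma>1 \<sigma>2 =
     (\<Sum>s\<in>S. P s * (\<Sum>a1\<in>acts A. \<Sum>a2\<in>acts A.
        pmf (\<sigma>1 (T1 s)) a1 * pmf (\<sigma>2 (T2 s)) a2 * payoff M i (T1 s) (T2 s) a1 a2))"

definition value1 where
  "value1 A S P T1 T2 M = (SUP \<sigma>1\<in>strategies A. INF \<sigma>2\<in>strategies A. exp_payoff A S P T1 T2 M 1 \<sigma>1 \<sigma>2)"

definition value2 where
  "value2 A S P T1 T2 M = (SUP \<sigma>2\<in>strategies A. INF \<sigma>1\<in>strategies A. exp_payoff A S P T1 T2 M 2 \<sigma>1 \<sigma>2)"

text \<open>error = (v_1(G_2(B,M)) + v_2(G_1(B,M)))/2; G_1 gives agent 1 type C_w, G_2 gives agent 1 type C_l.\<close>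
definition error where
  "error A S P Cw Cl M = (value1 A S P Cl Cw M + value2 A S P Cw Cl M) / 2"

definition min_error where
  "min_error A S P Cw Cl = (INF M\<in>policies A. error A S P Cw Cl M)"

end

theory Submission
  imports Defs
begin


lemma payoff_bounds:
  assumes "M \<in> policies A" "i \<in> {1,2}" "a1 \<in> acts A" "a2 \<in> acts A"
  shows "0 \<le> payoff M i t1 t2 a1 a2 \<and> payoff M i t1 t2 a1 a2 \<le> 1"
  using assms unfolding payoff_def policies_def by auto

lemma exp_nonneg:
  assumes "\<forall>s\<in>S. 0 \<le> P s" "M \<in> policies A" "i \<in> {1,2}"
  shows "0 \<le> exp_payoff A S P T1 T2 M i \<sigma>1 \<sigma>2"
  unfolding exp_payoff_def
  using assms payoff_bounds[OF assms(2,3)]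
  by (intro sum_nonneg mult_nonneg_nonneg) auto

lemma exp_upper:
  assumes "\<forall>s\<in>S. 0 \<le> P s" "M \<in> policies A" "i \<in> {1,2}"
  shows "exp_payoff A S P T1 T2 M i \<sigma>1 \<sigma>2 \<le> (\<Sum>s\<in>S. P s * (real (card (acts A)) * real (card (acts A))))"
  unfolding exp_payoff_def
proof (rule sum_mono, rule mult_left_mono)
  fix s assume "s \<in> S"
  show "(\<Sum>a1\<in>acts A. \<Sum>a2\<in>acts A. pmf (\<sigma>1 (T1 s)) a1 * pmf (\<sigma>2 (T2 s)) a2 * payoff M i (T1 s) (T2 s) a1 a2)
    \<le> real (card (acts A)) * real (card (acts A))"
  proof (rule sum_bounded_above[THEN order_trans])
    fix a1 assume a1: "a1 \<in> acts A"
    show "(\<Sum>a2\<in>acts A. pmf (\<sigma>1 (T1 s)) a1 * pmf (\<sigma>2 (T2 s)) a2 * payoff M i (T1 s) (T2 s) a1 a2) \<le> real (card (acts A)) * 1"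
    proof (rule sum_bounded_above)
      fix a2 assume a2: "a2 \<in> acts A"
      have "pmf (\<sigma>1 (T1 s)) a1 * pmf (\<sigma>2 (T2 s)) a2 \<le> 1"
        by (simp add: mult_le_one pmf_le_1)
      moreover have "0 \<le> payoff M i (T1 s) (T2 s) a1 a2" "payoff M i (T1 s) (T2 s) a1 a2 \<le> 1"
        using payoff_bounds[OF assms(2,3) a1 a2] by auto
      ultimately show "pmf (\<sigma>1 (T1 s)) a1 * pmf (\<sigma>2 (T2 s)) a2 * payoff M i (T1 s) (T2 s) a1 a2 \<le> 1"
        by (simp add: mult_le_one)
    qed
  next
    show "real (card (acts A)) * (real (card (acts A)) * 1) \<le> real (card (acts A)) * real (card (acts A))" by simp
  qed
  show "0 \<le> P s" using assms \<open>s \<in> S\<close> by auto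
qed

lemma strategies_ne: "strategies A \<noteq> {}"
proof -
  have "(\<lambda>t. return_pmf None) \<in> strategies A" by (simp add: strategies_def acts_def)
  then show ?thesis by blast
qed

lemma value1_ge:
  assumes "\<forall>s\<in>S. 0 \<le> P s" "M \<in> policies A" "\<sigma> \<in> strategies A"
    "\<And>\<tau>. \<tau> \<in> strategies A \<Longrightarrow> v \<le> exp_payoff A S P T1 T2 M 1 \<sigma> \<tau>"
  shows "v \<le> value1 A S P T1 T2 M"
  unfolding value1_def
proof (rule cSUP_upper2[OF _ assms(3)])
  obtain \<tau>0 where t0: "\<tau>0 \<in> strategies A" using strategies_ne by blast
  show "bdd_above ((\<lambda>\<sigma>1. INF \<sigma>2\<in>strategies A. exp_payoff A S P T1 T2 M 1 \<sigma>1 \<sigma>2) ` strategies A)"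
  proof (rule bdd_aboveI2)
    fix x assume "x \<in> strategies A"
    show "(INF \<sigma>2\<in>strategies A. exp_payoff A S P T1 T2 M 1 x \<sigma>2) \<le> (\<Sum>s\<in>S. P s * (real (card (acts A)) * real (card (acts A))))"
      by (rule cINF_lower2[OF _ t0 exp_upper[OF assms(1,2)]])
         (auto intro!: bdd_belowI2 exp_nonneg[OF assms(1,2)])
  qed
  show "v \<le> (INF \<sigma>2\<in>strategies A. exp_payoff A S P T1 T2 M 1 \<sigma> \<sigma>2)"
    by (rule cINF_greatest[OF strategies_ne]) (rule assms(4))
qed

lemma value2_ge:
  assumes "\<forall>s\<in>S. 0 \<le> P s" "M \<in> policies A" "\<sigma> \<in> strategies A"
    "\<And>\<tau>. \<tau> \<in> strategies A \<Longrightarrow> v \<le> exp_payoff A S P T1 T2 M 2 \<tau> \<sigma>"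
  shows "v \<le> value2 A S P T1 T2 M"
  unfolding value2_def
proof (rule cSUP_upper2[OF _ assms(3)])
  obtain \<tau>0 where t0: "\<tau>0 \<in> strategies A" using strategies_ne by blast
  show "bdd_above ((\<lambda>\<sigma>2. INF \<sigma>1\<in>strategies A. exp_payoff A S P T1 T2 M 2 \<sigma>1 \<sigma>2) ` strategies A)"
  proof (rule bdd_aboveI2)
    fix x assume "x \<in> strategies A"
    show "(INF \<sigma>1\<in>strategies A. exp_payoff A S P T1 T2 M 2 \<sigma>1 x) \<le> (\<Sum>s\<in>S. P s * (real (card (acts A)) * real (card (acts A))))"
      by (rule cINF_lower2[OF _ t0 exp_upper[OF assms(1,2)]])
         (auto intro!: bdd_belowI2 exp_nonneg[OF assms(1,2)])
  qed
  show "v \<le> (INF \<sigma>1\<in>strategies A. exp_payoff A S P T1 T2 M 2 \<sigma>1 \<sigma>)"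
    by (rule cINF_greatest[OF strategies_ne]) (rule assms(4))
qed

lemma value1_le:
  assumes "\<forall>s\<in>S. 0 \<le> P s" "M \<in> policies A" "\<tau> \<in> strategies A"
    "\<And>\<sigma>. \<sigma> \<in> strategies A \<Longrightarrow> exp_payoff A S P T1 T2 M 1 \<sigma> \<tau> \<le> v"
  shows "value1 A S P T1 T2 M \<le> v"
  unfolding value1_def
proof (rule cSUP_least[OF strategies_ne])
  fix \<sigma> assume h: "\<sigma> \<in> strategies A"
  show "(INF \<tau>'\<in>strategies A. exp_payoff A S P T1 T2 M 1 \<sigma> \<tau>') \<le> v"
    using assms(3) assms(4)[OF h]
    by (intro cINF_lower2) (auto intro!: bdd_belowI2 exp_nonneg[OF assms(1,2)])
qed

lemma value2_le:
  assumes "\<forall>s\<in>S. 0 \<le> P s" "M \<in> policies A" "\<tau> \<in> strategies A"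
    "\<And>\<sigma>. \<sigma> \<in> strategies A \<Longrightarrow> exp_payoff A S P T1 T2 M 2 \<tau> \<sigma> \<le> v"
  shows "value2 A S P T1 T2 M \<le> v"
  unfolding value2_def
proof (rule cSUP_least[OF strategies_ne])
  fix \<sigma> assume h: "\<sigma> \<in> strategies A"
  show "(INF \<tau>'\<in>strategies A. exp_payoff A S P T1 T2 M 2 \<tau>' \<sigma>) \<le> v"
    using assms(3) assms(4)[OF h]
    by (intro cINF_lower2) (auto intro!: bdd_belowI2 exp_nonneg[OF assms(1,2)])
qed

lemma error_nonneg:
  assumes "\<forall>s\<in>S. 0 \<le> P s" "M \<in> policies A"
  shows "0 \<le> error A S P Cw Cl M"
proof -
  obtain \<tau>0 where t0: "\<tau>0 \<in> strategies A" using strategies_ne by blast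
  have "0 \<le> value1 A S P Cl Cw M"
    by (rule value1_ge[OF assms t0]) (rule exp_nonneg[OF assms], simp)
  moreover have "0 \<le> value2 A S P Cw Cl M"
    by (rule value2_ge[OF assms t0]) (rule exp_nonneg[OF assms], simp)
  ultimately show ?thesis unfolding error_def by simp
qed



lemma exp_const1:
  assumes "\<forall>s\<in>S. T1 s = W"
  shows "exp_payoff A S P T1 T2 M i \<sigma>1 \<sigma>2 = (\<Sum>a1\<in>acts A. pmf (\<sigma>1 W) a1 *
     (\<Sum>s\<in>S. P s * (\<Sum>a2\<in>acts A. pmf (\<sigma>2 (T2 s)) a2 * payoff M i W (T2 s) a1 a2)))"
proof -
  have "exp_payoff A S P T1 T2 M i \<sigma>1 \<sigma>2 = (\<Sum>s\<in>S. \<Sum>a1\<in>acts A. pmf (\<sigma>1 W) a1 *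
     (P s * (\<Sum>a2\<in>acts A. pmf (\<sigma>2 (T2 s)) a2 * payoff M i W (T2 s) a1 a2)))"
    unfolding exp_payoff_def
    by (rule sum.cong[OF refl]) (simp add: assms sum_distrib_left mult_ac)
  also have "\<dots> = (\<Sum>a1\<in>acts A. pmf (\<sigma>1 W) a1 *
     (\<Sum>s\<in>S. P s * (\<Sum>a2\<in>acts A. pmf (\<sigma>2 (T2 s)) a2 * payoff M i W (T2 s) a1 a2)))"
    by (subst sum.swap) (simp add: sum_distrib_left)
  finally show ?thesis .
qed

lemma exp_const2:
  assumes "\<forall>s\<in>S. T2 s = W"
  shows "exp_payoff A S P T1 T2 M i \<sigma>1 \<sigma>2 = (\<Sum>a2\<in>acts A. pmf (\<sigma>2 W) a2 *
     (\<Sum>s\<in>S. P s * (\<Sum>a1\<in>acts A. pmf (\<sigma>1 (T1 s)) a1 * payoff M i (T1 s) W a1 a2)))"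
proof -
  have "exp_payoff A S P T1 T2 M i \<sigma>1 \<sigma>2 = (\<Sum>s\<in>S. \<Sum>a2\<in>acts A. pmf (\<sigma>2 W) a2 *
     (P s * (\<Sum>a1\<in>acts A. pmf (\<sigma>1 (T1 s)) a1 * payoff M i (T1 s) W a1 a2)))"
    unfolding exp_payoff_def
    by (rule sum.cong[OF refl]) (subst sum.swap, simp add: assms sum_distrib_left mult_ac)
  also have "\<dots> = (\<Sum>a2\<in>acts A. pmf (\<sigma>2 W) a2 *
     (\<Sum>s\<in>S. P s * (\<Sum>a1\<in>acts A. pmf (\<sigma>1 (T1 s)) a1 * payoff M i (T1 s) W a1 a2)))"
    by (subst sum.swap) (simp add: sum_distrib_left)
  finally show ?thesis .
qed

lemma convex_lb:
  assumes "finite A" "set_pmf q \<subseteq> A" "\<And>x. x \<in> A \<Longrightarrow> m \<le> c x"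
  shows "m \<le> (\<Sum>x\<in>A. pmf q x * c x)"
proof -
  have "m = (\<Sum>x\<in>A. pmf q x * m)" using sum_pmf_eq_1[OF assms(1,2)]
    by (simp add: sum_distrib_right[symmetric])
  also have "\<dots> \<le> (\<Sum>x\<in>A. pmf q x * c x)"
    by (rule sum_mono) (simp add: assms(3) mult_left_mono)
  finally show ?thesis .
qed

definition AA :: "nat set" where "AA = {0,1,2}"
definition PP :: "nat \<Rightarrow> real" where "PP s = 1/3"
definition Cw0 :: "nat \<Rightarrow> nat set" where "Cw0 s = {s}"
definition Cl0 :: "nat \<Rightarrow> nat set" where "Cl0 s = {(s+2) mod 3}"
definition Cw1 :: "nat \<Rightarrow> nat set" where "Cw1 s = {0,1,2}"

lemma acts_AA: "acts AA = {None, Some 0, Some 1, Some 2}"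
  by (auto simp: acts_def AA_def)

definition ff :: "nat option \<Rightarrow> nat option \<Rightarrow> real" where
  "ff a1 a2 = (case (a1, a2) of (None, None) \<Rightarrow> 1/2 | (Some i, None) \<Rightarrow> 1 | (None, Some j) \<Rightarrow> 0
     | (Some i, Some j) \<Rightarrow> (if i = j then 1/2 else if j = (i+2) mod 3 then 1 else 0))"

definition M0 :: "nat \<Rightarrow> nat option \<Rightarrow> nat option \<Rightarrow> real" where
  "M0 i a1 a2 = (if i = 1 then ff a1 a2 else 1 - ff a1 a2)"

lemma M0_pol: "M0 \<in> policies AA"
  unfolding policies_def M0_def ff_def by (auto split: option.splits)

definition sW :: "nat set \<Rightarrow> nat option pmf" where
  "sW t = return_pmf (if t \<inter> AA = {} then None else Some (Min (t \<inter> AA)))"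

lemma sW_strat: "sW \<in> strategies AA"
proof -
  have "Min (t \<inter> AA) \<in> AA" if "t \<inter> AA \<noteq> {}" for t
    using Min_in[of "t \<inter> AA"] that by (auto simp: AA_def)
  then show ?thesis by (auto simp: strategies_def sW_def acts_def)
qed

lemma sW_single: "s \<in> AA \<Longrightarrow> sW {s} = return_pmf (Some s)"
  by (simp add: sW_def)

lemma exp_B1: "exp_payoff AA AA PP Cw0 Cl0 M0 2 sW \<tau> = 0"
  unfolding exp_payoff_def acts_AA
  by (simp add: AA_def Cw0_def Cl0_def sW_single payoff_def available_def M0_def ff_def)

lemma exp_B2: "exp_payoff AA AA PP Cl0 Cw0 M0 1 \<tau> sW = 0"
  unfolding exp_payoff_def acts_AA
  by (simp add: AA_def Cw0_def Cl0_def sW_single payoff_def available_def M0_def ff_def)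



definition sL :: "nat set \<Rightarrow> nat option pmf" where
  "sL t = pmf_of_set (insert None (Some ` (t \<inter> AA)))"

lemma sL_strat: "sL \<in> strategies AA"
  by (auto simp: strategies_def sL_def acts_def AA_def)

lemma pmf_sL: "j \<in> AA \<Longrightarrow> pmf (sL {j}) a = (if a = None \<or> a = Some j then 1/2 else 0)"
  by (auto simp: sL_def AA_def)

definition c1 :: "(nat \<Rightarrow> nat option \<Rightarrow> nat option \<Rightarrow> real) \<Rightarrow> nat option \<Rightarrow> real" where
  "c1 M x = M 2 x None / 2 + (M 2 x (Some 0) + M 2 x (Some 1) + M 2 x (Some 2)) / 6"
definition c2 :: "(nat \<Rightarrow> nat option \<Rightarrow> nat option \<Rightarrow> real) \<Rightarrow> nat option \<Rightarrow> real" where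
  "c2 M x = M 1 None x / 2 + (M 1 (Some 0) x + M 1 (Some 1) x + M 1 (Some 2) x) / 6"

lemma Cl0_AA: "s \<in> AA \<Longrightarrow> (s + 2) mod 3 \<in> AA"
  by (auto simp: AA_def)

lemma inner1: "x \<in> acts AA \<Longrightarrow>
  (\<Sum>s\<in>AA. PP s * (\<Sum>a2\<in>acts AA. pmf (sL (Cl0 s)) a2 * payoff M 2 {0,1,2} (Cl0 s) x a2)) = c1 M x"
  unfolding acts_AA
  apply (auto simp: AA_def Cl0_def PP_def pmf_sL payoff_def available_def c1_def)
  apply (simp_all add: field_simps)
  done

lemma inner2: "x \<in> acts AA \<Longrightarrow>
  (\<Sum>s\<in>AA. PP s * (\<Sum>a1\<in>acts AA. pmf (sL (Cl0 s)) a1 * payoff M 1 (Cl0 s) {0,1,2} a1 x)) = c2 M x"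
  unfolding acts_AA
  apply (auto simp: AA_def Cl0_def PP_def pmf_sL payoff_def available_def c2_def)
  apply (simp_all add: field_simps)
  done



lemma key_arith:
  assumes "M \<in> policies AA" "x1 \<in> acts AA" "x2 \<in> acts AA"
  shows "1/6 \<le> c1 M x1 + c2 M x2"
proof -
  have P: "\<And>a b. a \<in> acts AA \<Longrightarrow> b \<in> acts AA \<Longrightarrow> 0 \<le> M 1 a b \<and> M 1 a b \<le> 1 \<and> M 2 a b = 1 - M 1 a b"
    using assms(1) unfolding policies_def by force
  have N: "None \<in> acts AA" "Some 0 \<in> acts AA" "Some 1 \<in> acts AA" "Some 2 \<in> acts AA"
    by (auto simp: acts_AA)
  have L: "\<And>a b. a \<in> acts AA \<Longrightarrow> b \<in> acts AA \<Longrightarrow> 0 \<le> M 1 a b" using P by blast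
  have U: "\<And>a b. a \<in> acts AA \<Longrightarrow> b \<in> acts AA \<Longrightarrow> M 1 a b \<le> 1" using P by blast
  have E: "\<And>a b. a \<in> acts AA \<Longrightarrow> b \<in> acts AA \<Longrightarrow> M 2 a b = 1 - M 1 a b" using P by blast
  note EL = E[OF N(1) N(1)] E[OF N(1) N(2)] E[OF N(1) N(3)] E[OF N(1) N(4)]
           E[OF N(2) N(1)] E[OF N(2) N(2)] E[OF N(2) N(3)] E[OF N(2) N(4)]
           E[OF N(3) N(1)] E[OF N(3) N(2)] E[OF N(3) N(3)] E[OF N(3) N(4)]
           E[OF N(4) N(1)] E[OF N(4) N(2)] E[OF N(4) N(3)] E[OF N(4) N(4)]
  note LL = L[OF N(1) N(1)] L[OF N(1) N(2)] L[OF N(1) N(3)] L[OF N(1) N(4)]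
           L[OF N(2) N(1)] L[OF N(2) N(2)] L[OF N(2) N(3)] L[OF N(2) N(4)]
           L[OF N(3) N(1)] L[OF N(3) N(2)] L[OF N(3) N(3)] L[OF N(3) N(4)]
           L[OF N(4) N(1)] L[OF N(4) N(2)] L[OF N(4) N(3)] L[OF N(4) N(4)]
  note UL = U[OF N(1) N(1)] U[OF N(1) N(2)] U[OF N(1) N(3)] U[OF N(1) N(4)]
           U[OF N(2) N(1)] U[OF N(2) N(2)] U[OF N(2) N(3)] U[OF N(2) N(4)]
           U[OF N(3) N(1)] U[OF N(3) N(2)] U[OF N(3) N(3)] U[OF N(3) N(4)]
           U[OF N(4) N(1)] U[OF N(4) N(2)] U[OF N(4) N(3)] U[OF N(4) N(4)]
  from assms(2,3) LL UL show ?thesis unfolding acts_AA c1_def c2_def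
    apply (elim insertE emptyE)
    apply (simp_all only: EL)
    apply (simp_all add: field_simps)
    done
qed

lemma B'_lb:
  assumes "M \<in> policies AA"
  shows "1/12 \<le> error AA AA PP Cw1 Cl0 M"
proof -
  have Pn: "\<forall>s\<in>AA. 0 \<le> PP s" by (simp add: PP_def)
  have fin: "finite (acts AA)" by (simp add: acts_AA)
  have ne: "acts AA \<noteq> {}" by (simp add: acts_AA)
  define m1 where "m1 = Min (c1 M ` acts AA)"
  define m2 where "m2 = Min (c2 M ` acts AA)"
  have "m1 \<in> c1 M ` acts AA" unfolding m1_def using fin ne by (intro Min_in) auto
  then obtain x1 where x1: "x1 \<in> acts AA" "m1 = c1 M x1" by auto
  have "m2 \<in> c2 M ` acts AA" unfolding m2_def using fin ne by (intro Min_in) auto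
  then obtain x2 where x2: "x2 \<in> acts AA" "m2 = c2 M x2" by auto
  have m1le: "\<And>x. x \<in> acts AA \<Longrightarrow> m1 \<le> c1 M x" unfolding m1_def using fin by simp
  have m2le: "\<And>x. x \<in> acts AA \<Longrightarrow> m2 \<le> c2 M x" unfolding m2_def using fin by simp
  have cw1: "\<forall>s\<in>AA. Cw1 s = {0,1,2}" by (simp add: Cw1_def)
  have v2: "m1 \<le> value2 AA AA PP Cw1 Cl0 M"
  proof (rule value2_ge[OF Pn assms sL_strat])
    fix \<tau> assume t: "\<tau> \<in> strategies AA"
    have "exp_payoff AA AA PP Cw1 Cl0 M 2 \<tau> sL = (\<Sum>a1\<in>acts AA. pmf (\<tau> {0,1,2}) a1 * c1 M a1)"
      apply (subst exp_const1[OF cw1])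
      apply (rule sum.cong[OF refl])
      apply (subst inner1, assumption, rule refl)
      done
    also have "m1 \<le> \<dots>"
      by (rule convex_lb[OF fin]) (use t m1le in \<open>auto simp: strategies_def\<close>)
    finally show "m1 \<le> exp_payoff AA AA PP Cw1 Cl0 M 2 \<tau> sL" .
  qed
  have v1: "m2 \<le> value1 AA AA PP Cl0 Cw1 M"
  proof (rule value1_ge[OF Pn assms sL_strat])
    fix \<tau> assume t: "\<tau> \<in> strategies AA"
    have "exp_payoff AA AA PP Cl0 Cw1 M 1 sL \<tau> = (\<Sum>a2\<in>acts AA. pmf (\<tau> {0,1,2}) a2 * c2 M a2)"
      apply (subst exp_const2[OF cw1])
      apply (rule sum.cong[OF refl])
      apply (subst inner2, assumption, rule refl)
      done
    also have "m2 \<le> \<dots>"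
      by (rule convex_lb[OF fin]) (use t m2le in \<open>auto simp: strategies_def\<close>)
    finally show "m2 \<le> exp_payoff AA AA PP Cl0 Cw1 M 1 sL \<tau>" .
  qed
  have "1/6 \<le> m1 + m2" using key_arith[OF assms x1(1) x2(1)] x1 x2 by simp
  then show ?thesis using v1 v2 unfolding error_def by simp
qed

lemma B_ub: "error AA AA PP Cw0 Cl0 M0 \<le> 0"
proof -
  have Pn: "\<forall>s\<in>AA. 0 \<le> PP s" by (simp add: PP_def)
  have "value1 AA AA PP Cl0 Cw0 M0 \<le> 0"
    by (rule value1_le[OF Pn M0_pol sW_strat]) (metis exp_B2 order_refl)
  moreover have "value2 AA AA PP Cw0 Cl0 M0 \<le> 0"
    by (rule value2_le[OF Pn M0_pol sW_strat]) (metis exp_B1 order_refl)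
  ultimately show ?thesis unfolding error_def by simp
qed

theorem proposition3p5:
  shows "\<exists>A S P Cw Cl Cw' Cl'. piddg A S P Cw Cl \<and> piddg A S P Cw' Cl'
     \<and> (\<forall>s\<in>S. Cw s \<subseteq> Cw' s \<and> Cl' s \<subseteq> Cl s)
     \<and> min_error A S P Cw' Cl' > min_error A S P Cw Cl"
proof (intro exI conjI)
  have Pn: "\<forall>s\<in>AA. 0 \<le> PP s" by (simp add: PP_def)
  show "piddg AA AA PP Cw0 Cl0"
    by (auto simp: piddg_def AA_def PP_def Cw0_def Cl0_def)
  show "piddg AA AA PP Cw1 Cl0"
    by (auto simp: piddg_def AA_def PP_def Cw1_def Cl0_def)
  show "\<forall>s\<in>AA. Cw0 s \<subseteq> Cw1 s \<and> Cl0 s \<subseteq> Cl0 s"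
    by (auto simp: AA_def Cw0_def Cw1_def)
  have pne: "policies AA \<noteq> {}" using M0_pol by blast
  have "min_error AA AA PP Cw0 Cl0 \<le> 0"
    unfolding min_error_def
    using M0_pol B_ub by (intro cINF_lower2) (auto intro!: bdd_belowI2 error_nonneg[OF Pn])
  moreover have "1/12 \<le> min_error AA AA PP Cw1 Cl0"
    unfolding min_error_def by (rule cINF_greatest[OF pne]) (rule B'_lb)
  ultimately show "min_error AA AA PP Cw0 Cl0 < min_error AA AA PP Cw1 Cl0" by simp
qed

end
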